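(* For $n\in\mathbb{N}$, $z(n)=f(n)+n$ if and only if $n=0$ or $n=\lfloor k\varphi^2\rfloor+1$ for some integer $k\ge1$, where $\varphi=(1+\sqrt5)/2$.
   Context: $\mathbb{N}=\{0,1,2,\dots\}$. The sequence $f:\mathbb{N}\to\mathbb{N}$ is defined greedily: $f(0)=0$, and for $n\ge1$, $f(n)$ is the least natural number such that (i) $f(n)\notin\{f(0),f(1),\dots,f(n-1)\}$ and (ii) $\sum_{1\le i\le n} f(i)$ is divisible by $n$. The sequence $z:\mathbb{N}\to\mathbb{N}$ is defined greedily: $z(0)=0$, and for $n\ge1$, $z(n)$ is the least natural number such that (i) $z(n)\notin\{z(0),\dots,z(n-1)\}$ and (ii) $\sum_{2\le i\le n} z(i)$ is divisible by $n+1$ (the empty sum being $0$). *)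

theory Defs
  imports Complex_Main
begin

fun fpre :: "nat \<Rightarrow> nat list" where
  "fpre 0 = [0]"
| "fpre (Suc n) = (let xs = fpre n in
     xs @ [LEAST m. m \<notin> set xs \<and> Suc n dvd (sum_list (drop 1 xs) + m)])"

definition f :: "nat \<Rightarrow> nat" where
  "f n = last (fpre n)"

(* zpre n = [z 0, z 1, ..., z n]; condition: sum_{2<=i<=n+1} z(i) divisible by n+2,
   where the sum over 2..1 is empty *)
fun zpre :: "nat \<Rightarrow> nat list" where
  "zpre 0 = [0]"
| "zpre (Suc n) = (let xs = zpre n in
     xs @ [LEAST m. m \<notin> set xs \<and>
             (Suc n + 1) dvd (sum_list (drop 2 (xs @ [m])))])"

definition z :: "nat \<Rightarrow> nat" where
  "z n = last (zpre n)"

definition phi :: real where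
  "phi = (1 + sqrt 5) / 2"

end

theory Submission
  imports Defs
begin

lemma phi_pos: "phi > 1" unfolding phi_def
proof -
  have "sqrt 5 > 1" by (simp add: real_less_rsqrt)
  then show "(1 + sqrt 5) / 2 > 1" by simp
qed
lemma phi_sq: "phi * phi = phi + 1"
  unfolding phi_def by (simp add: field_simps)

lemma phi_lt2: "phi < 2" unfolding phi_def
proof -
  have "sqrt 5 < 3" by (rule real_less_lsqrt) auto
  thus "(1 + sqrt 5) / 2 < 2" by simp
qed
lemma phi_sq': "x * phi * phi = x * phi + x"
  by (metis distrib_left mult.assoc mult.right_neutral phi_sq)

lemma descent: "(m::nat)*m = m*k + k*k \<Longrightarrow> k = 0"
proof (induction k arbitrary: m rule: less_induct)
  case (less k)
  show ?case
  proof (rule ccontr)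
    assume k0: "k \<noteq> 0"
    have kk: "k*k > 0" using k0 by simp
    have mk: "m > k"
    proof (rule ccontr)
      assume "\<not> m > k" hence "m \<le> k" by simp
      hence "m*m \<le> m*k" by (rule mult_le_mono2)
      thus False using less.prems kk by linarith
    qed
    have m2: "m < 2*k"
    proof (rule ccontr)
      assume "\<not> m < 2*k" hence "m \<ge> 2*k" by simp
      hence "m*m \<ge> m*(2*k)" by (rule mult_le_mono2)
      moreover have "k*k < m*k" using mk k0 by (rule_tac mult_strict_right_mono) auto
      ultimately show False using less.prems by (simp add: algebra_simps)
    qed
    have "int k * int k = int k*(int m - int k) + (int m - int k)*(int m - int k)"
      using arg_cong[OF less.prems, of int] by (simp add: algebra_simps)
    hence "int (k*k) = int (k*(m-k) + (m-k)*(m-k))" using mk by (simp add: of_nat_diff)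
    hence "k*k = k*(m-k) + (m-k)*(m-k)" by (metis of_nat_eq_iff)
    hence "m - k = 0" using less.IH[of "m-k" k] m2 by linarith
    thus False using mk by simp
  qed
qed

lemma phi_irr: assumes "k \<ge> 1" shows "real k * phi \<noteq> real m"
proof
  assume h: "real k * phi = real m"
  have e: "real k * phi * phi = real k * phi + real k" by (rule phi_sq')
  have "real m * real m = (real k * phi) * (real k * phi)" using h by simp
  also have "\<dots> = real k * (real k * phi * phi)" by (simp add: algebra_simps)
  also have "\<dots> = real k * (real m + real k)" using e h by simp
  finally have "real (m*m) = real (m*k + k*k)" by (simp add: algebra_simps)
  hence "m*m = m*k + k*k" by (metis of_nat_eq_iff)
  thus False using descent assms by auto
qed

definition g :: "nat \<Rightarrow> nat" where "g n = nat \<lfloor>real n / phi\<rfloor>"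

lemma g_real: "real (g n) = of_int \<lfloor>real n / phi\<rfloor>"
  unfolding g_def using phi_pos by simp

lemma g_lower: "real (g n) * phi \<le> real n"
proof -
  have "of_int \<lfloor>real n / phi\<rfloor> \<le> real n / phi" by (rule of_int_floor_le)
  hence "of_int \<lfloor>real n / phi\<rfloor> * phi \<le> real n / phi * phi"
    using phi_pos by (intro mult_right_mono) auto
  thus ?thesis using phi_pos g_real by simp
qed

lemma g_upper: "real n < (real (g n) + 1) * phi"
proof -
  have "real n / phi < of_int \<lfloor>real n / phi\<rfloor> + 1" by (rule real_of_int_floor_add_one_gt)
  hence "real n / phi * phi < (of_int \<lfloor>real n / phi\<rfloor> + 1) * phi"
    using phi_pos by (intro mult_strict_right_mono) auto
  thus ?thesis using phi_pos g_real by simp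
qed

lemma g_eqI: assumes "real k * phi \<le> real n" "real n < (real k + 1) * phi" shows "g n = k"
proof -
  have "real k \<le> real n / phi" "real n / phi < real k + 1"
    using assms phi_pos by (simp_all add: pos_le_divide_eq pos_divide_less_eq)
  hence "\<lfloor>real n / phi\<rfloor> = int k" by (simp add: floor_eq_iff)
  thus ?thesis unfolding g_def by simp
qed

lemma g_strict: "g n \<ge> 1 \<Longrightarrow> real (g n) * phi < real n"
  using g_lower[of n] phi_irr[of "g n" n] by (simp add: less_le)


lemma mphi: "a < b \<Longrightarrow> a * phi < b * phi" using phi_pos by simp
lemma mphi_le: "a \<le> b \<Longrightarrow> a * phi \<le> b * phi" using phi_pos by simp
lemma mpm: "a < b \<Longrightarrow> a * (phi - 1) < b * (phi - 1)" using phi_pos by simp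
lemma mpm_le: "a \<le> b \<Longrightarrow> a * (phi - 1) \<le> b * (phi - 1)" using phi_pos by simp
lemma pm_eq: "x * phi * (phi - 1) = x" using phi_sq'[of x] by (simp add: algebra_simps)

lemma g_step: "g (Suc n) = g n \<or> g (Suc n) = Suc (g n)"
proof -
  have a: "g n \<le> g (Suc n)"
  proof (rule ccontr)
    assume "\<not> g n \<le> g (Suc n)"
    hence "real (g (Suc n)) + 1 \<le> real (g n)" by simp
    hence "(real (g (Suc n)) + 1) * phi \<le> real (g n) * phi" by (rule mphi_le)
    thus False using g_upper[of "Suc n"] g_lower[of n] by simp
  qed
  have b: "g (Suc n) \<le> Suc (g n)"
  proof (rule ccontr)
    assume "\<not> g (Suc n) \<le> Suc (g n)"
    hence "real (g n) + 2 \<le> real (g (Suc n))" by simp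
    hence "(real (g n) + 2) * phi \<le> real (g (Suc n)) * phi" by (rule mphi_le)
    thus False using g_upper[of "n"] g_lower[of "Suc n"] phi_pos by (simp add: algebra_simps)
  qed
  from a b show ?thesis by linarith
qed

lemma g_mono: "a \<le> b \<Longrightarrow> g a \<le> g b"
proof (induction b)
  case 0 thus ?case by simp
next
  case (Suc b) thus ?case using g_step[of b] by (cases "a = Suc b") auto
qed

lemma g_two: "Suc (g n) \<le> g (Suc (Suc n))"
proof (rule ccontr)
  assume "\<not> Suc (g n) \<le> g (Suc (Suc n))"
  hence "real (g (Suc (Suc n))) + 1 \<le> real (g n) + 1" by simp
  hence "(real (g (Suc (Suc n))) + 1) * phi \<le> (real (g n) + 1) * phi" by (rule mphi_le)
  thus False using g_upper[of "Suc (Suc n)"] g_lower[of n] phi_lt2 by (simp add: algebra_simps)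
qed

lemma g0: "g 0 = 0" by (rule g_eqI) (use phi_pos in auto)
lemma g1: "g 1 = 0" by (rule g_eqI) (use phi_pos in auto)
lemma g2: "g 2 = 1" by (rule g_eqI) (use phi_pos phi_lt2 in auto)
lemma g3: "g 3 = 1"
proof (rule g_eqI)
  have "sqrt 5 > 2" by (rule real_less_rsqrt) auto
  thus "real 3 < (real 1 + 1) * phi" unfolding phi_def by simp
qed (use phi_lt2 in auto)

lemma g_lt: "n \<ge> 1 \<Longrightarrow> g n < n"
proof (rule ccontr)
  assume n: "n \<ge> 1" "\<not> g n < n"
  hence "real n \<le> real (g n)" by simp
  hence "real n * phi \<le> real (g n) * phi" by (rule mphi_le)
  thus False using g_lower[of n] phi_pos n by (smt (verit) mult_less_cancel_left1 of_nat_0_less_iff less_le_trans zero_less_one)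
qed

lemma g_ge1: "n \<ge> 2 \<Longrightarrow> g n \<ge> 1" using g_mono[of 2 n] g2 by simp

definition up :: "nat \<Rightarrow> bool" where "up n \<longleftrightarrow> n \<ge> 1 \<and> g n = Suc (g (n - 1))"

lemma flat: "n \<ge> 1 \<Longrightarrow> \<not> up n \<Longrightarrow> g n = g (n - 1)"
  using g_step[of "n-1"] unfolding up_def by auto

definition F :: "nat \<Rightarrow> nat" where
  "F n = (if n = 0 then 0 else if up n then g n + n else g n + 1)"

lemma inv_up: assumes u: "up n" shows "F (g n + n) = n"
proof -
  define K where "K = g n"
  have n1: "n \<ge> 1" and gK: "g (n-1) + 1 = K" using u unfolding up_def K_def by auto
  have K1: "K \<ge> 1" using gK by simp
  have rK: "real K = real (g (n-1)) + 1" using arg_cong[OF gK, of real] by simp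
  have h1: "real n - 1 < real K * phi" using g_upper[of "n-1"] n1 unfolding rK by (simp add: of_nat_diff)
  have h2: "real K * phi < real n" using g_strict[of n] K1 K_def by simp
  have h3: "real K * phi * (phi - 1) < real n * (phi - 1)" using mpm[OF h2] .
  have h4: "(real n - 1) * (phi - 1) < real K * phi * (phi - 1)" using mpm[OF h1] .
  have A: "g (K + n) = n - 1"
    by (rule g_eqI) (use h3 h4 n1 pm_eq[of "real K"] in \<open>auto simp: of_nat_diff algebra_simps\<close>)
  have B: "g (K + n - 1) = n - 1"
    by (rule g_eqI) (use h3 h4 n1 pm_eq[of "real K"] in \<open>auto simp: of_nat_diff algebra_simps\<close>)
  have "\<not> up (K + n)" unfolding up_def using A B by simp
  thus ?thesis unfolding F_def K_def[symmetric] using A n1 by simp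
qed


lemma inv_flat: assumes n2: "n \<ge> 2" and nu: "\<not> up n" shows "up (g n + 1)" "F (g n + 1) = n"
proof -
  define K where "K = g n"
  have gK: "g (n-1) = K" using flat[of n] nu n2 K_def by simp
  have K1: "K \<ge> 1" using g_ge1[OF n2] K_def by simp
  have h1: "real K * phi < real n - 1" using g_strict[of "n-1"] K1 gK n2 by (simp add: of_nat_diff)
  have h2: "real n < (real K + 1) * phi" using g_upper[of n] K_def by simp
  have KK: "real K \<le> real K * phi" using K1 phi_pos by simp
  have Kn: "K + 2 \<le> n" using h1 KK K1 by linarith
  have m1: "real K * phi * phi < (real n - 1) * phi" using mphi[OF h1] .
  have m2: "real n * phi < (real K + 1) * phi * phi" using mphi[OF h2] .
  have e1: "(real K + 1) * phi * phi = real K * phi + phi + real K + 1"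
    using phi_sq'[of "real K + 1"] by (simp add: algebra_simps)
  have e2: "real K * phi * phi = real K * phi + real K" using phi_sq' .
  have e3: "(real n - 1) * phi = real n * phi - phi" by (simp add: algebra_simps)
  have r1: "real (n - K - 1) = real n - real K - 1" using Kn by (simp add: of_nat_diff)
  have r2: "real (n - K - 2) = real n - real K - 2" using Kn by (simp add: of_nat_diff)
  have d1: "(real n - real K - 1) * phi = real n * phi - real K * phi - phi" by (simp add: algebra_simps)
  have d2: "(real n - real K - 1 + 1) * phi = real n * phi - real K * phi" by (simp add: algebra_simps)
  have d3: "(real n - real K - 2) * phi = real n * phi - real K * phi - 2 * phi" by (simp add: algebra_simps)
  have A: "g (K + 1) = n - K - 1"
  proof (rule g_eqI)
    show "real (n - K - 1) * phi \<le> real (K + 1)" unfolding r1 d1 using m2 e1 by simp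
    show "real (K + 1) < (real (n - K - 1) + 1) * phi" unfolding r1 d2 using m1 e2 e3 phi_pos by simp
  qed
  have B: "g K = n - K - 2"
  proof (rule g_eqI)
    show "real (n - K - 2) * phi \<le> real K" unfolding r2 d3 using m2 e1 phi_pos by simp
    show "real K < (real (n - K - 2) + 1) * phi" unfolding r2 using m1 e2 e3 phi_pos
      by (simp add: algebra_simps)
  qed
  show "up (g n + 1)" unfolding up_def K_def[symmetric] using A B Kn by simp
  thus "F (g n + 1) = n" unfolding F_def K_def[symmetric] using A Kn by simp
qed

lemma F_inv: "F (F n) = n"
proof -
  consider "n = 0" | "n = 1" | "n \<ge> 2 \<and> up n" | "n \<ge> 2 \<and> \<not> up n" by linarith
  thus ?thesis
  proof cases
    case 1 thus ?thesis by (simp add: F_def)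
  next
    case 2
    have "\<not> up 1" unfolding up_def using g0 g1 by simp
    thus ?thesis using 2 g1 by (simp add: F_def)
  next
    case 3 thus ?thesis using inv_up[of n] by (simp add: F_def)
  next
    case 4 thus ?thesis using inv_flat[of n] by (simp add: F_def)
  qed
qed

lemma F_inj: "F a = F b \<Longrightarrow> a = b" by (metis F_inv)

lemma F_pos: "n \<ge> 1 \<Longrightarrow> F n \<ge> 1" by (simp add: F_def)

lemma F_le: "n \<ge> 1 \<Longrightarrow> F n \<le> g n + n" by (simp add: F_def)

lemma gK_bound: "real (g K) + real K \<le> real K * phi"
proof -
  have "real (g K) * phi * (phi - 1) \<le> real K * (phi - 1)" using mpm_le[OF g_lower[of K]] .
  thus ?thesis using pm_eq[of "real (g K)"] by (simp add: algebra_simps)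
qed

lemma F_used: assumes u: "up n" shows "F (g n) < n" "F (F (g n)) = g n"
proof -
  define K where "K = g n"
  have K1: "K \<ge> 1" using u unfolding up_def K_def by simp
  have "real (g K) + real K < real n" using gK_bound[of K] g_strict[of n] K1 K_def by simp
  hence "g K + K < n" by linarith
  thus "F (g n) < n" using F_le[OF K1] K_def by simp
  show "F (F (g n)) = g n" by (rule F_inv)
qed

lemma F_sum: "(\<Sum>i=1..n. F i) = n * (g n + 1)"
proof (induction n)
  case 0 thus ?case by simp
next
  case (Suc n)
  have "(\<Sum>i=1..Suc n. F i) = n * (g n + 1) + F (Suc n)" using Suc by simp
  also have "\<dots> = Suc n * (g (Suc n) + 1)"
    using g_step[of n] by (auto simp: F_def up_def)
  finally show ?case .
qed


lemma dvd_small: "(N::int) dvd x \<Longrightarrow> -N < x \<Longrightarrow> x < N \<Longrightarrow> x = 0"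
proof (rule ccontr)
  assume a: "N dvd x" "-N < x" "x < N" "x \<noteq> 0"
  hence "N dvd \<bar>x\<bar>" "0 < \<bar>x\<bar>" by auto
  hence "N \<le> \<bar>x\<bar>" by (rule zdvd_imp_le)
  thus False using a by linarith
qed

lemma sum_drop1: "sum_list (drop 1 (map F [0..<Suc n])) = (\<Sum>i=1..n. F i)"
proof -
  have "drop 1 (map F [0..<Suc n]) = map F [1..<Suc n]"
    by (simp add: drop_map upt_conv_Cons del: upt_Suc)
  thus ?thesis by (simp add: sum_set_upt_conv_sum_list_nat[symmetric] atLeastLessThanSuc_atLeastAtMost del: upt_Suc)
qed

lemma F_least: "(LEAST m. m \<notin> F ` {0..n} \<and> Suc n dvd ((\<Sum>i=1..n. F i) + m)) = F (Suc n)"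
proof (rule Least_equality)
  show "F (Suc n) \<notin> F ` {0..n} \<and> Suc n dvd ((\<Sum>i=1..n. F i) + F (Suc n))"
  proof
    show "F (Suc n) \<notin> F ` {0..n}" by (auto dest: F_inj)
    have "(\<Sum>i=1..n. F i) + F (Suc n) = Suc n * (g (Suc n) + 1)" using F_sum[of "Suc n"] by simp
    thus "Suc n dvd ((\<Sum>i=1..n. F i) + F (Suc n))" by (metis dvd_triv_left)
  qed
next
  fix y assume y: "y \<notin> F ` {0..n} \<and> Suc n dvd ((\<Sum>i=1..n. F i) + y)"
  define N where "N = Suc n"
  define s where "s = g n + 1"
  have dv: "int N dvd (int n * int s + int y)" using y F_sum[of n] N_def s_def
    by (metis of_nat_add of_nat_dvd_iff of_nat_mult)
  have dv2: "int N dvd (int y - int s)"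
  proof -
    have "int n * int s + int y = int N * int s + (int y - int s)" unfolding N_def by (simp add: algebra_simps)
    thus ?thesis using dv by (metis dvd_add_right_iff dvd_triv_left)
  qed
  have sN: "s \<le> N" using g_mono[of n "Suc n"] g_lt[of "Suc n"] unfolding s_def N_def by simp
  show "F (Suc n) \<le> y"
  proof (rule ccontr)
    assume less: "\<not> F (Suc n) \<le> y"
    show False
    proof (cases "up N")
      case True
      have gN: "g N = s" using True unfolding up_def s_def N_def by simp
      have n1: "n \<ge> 1" using True g0 g1 unfolding up_def N_def by (cases n) auto
      have "s < N" using g_lt[of n] n1 unfolding s_def N_def by simp
      moreover have "F N = s + N" using True gN unfolding F_def N_def by simp
      ultimately have "int y - int s = 0" using dv2 less N_def by (intro dvd_small) auto
      hence "y = g N" using gN by simp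
      moreover have "F (g N) < N" "F (F (g N)) = g N" using F_used[OF True] by auto
      ultimately have "y \<in> F ` {0..n}" using N_def by (intro image_eqI[of _ _ "F (g N)"]) auto
      thus False using y by simp
    next
      case False
      have "g N = g n" using flat[of N] False N_def by simp
      hence FN: "F N = s" using False unfolding F_def s_def N_def by simp
      show False
      proof (cases "y = 0")
        case True
        have "F 0 = 0" by (simp add: F_def)
        thus False using y True by force
      next
        case False
        hence "int y - int s = 0" using dv2 less FN sN N_def by (intro dvd_small) auto
        thus False using less FN N_def by simp
      qed
    qed
  qed
qed

lemma fpre_eq: "fpre n = map F [0..<Suc n]"
proof (induction n)
  case 0 thus ?case by (simp add: F_def)
next
  case (Suc n)
  have st: "set (map F [0..<Suc n]) = F ` {0..n}" by (simp add: atLeastLessThanSuc_atLeastAtMost del: upt_Suc)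
  have "fpre (Suc n) = map F [0..<Suc n] @ [LEAST m. m \<notin> set (map F [0..<Suc n]) \<and> Suc n dvd (sum_list (drop 1 (map F [0..<Suc n])) + m)]"
    using Suc by (simp add: Let_def del: upt_Suc)
  also have "\<dots> = map F [0..<Suc n] @ [F (Suc n)]" unfolding st sum_drop1 F_least ..
  finally show ?case by simp
qed

lemma f_eq: "f n = F n" unfolding f_def fpre_eq by simp


fun cd :: "nat \<Rightarrow> nat \<times> nat" where
  "cd 0 = (1, 2)"
| "cd (Suc j) = (fst (cd j) + snd (cd j), fst (cd j) + 2 * snd (cd j))"

definition dd :: "nat \<Rightarrow> nat" where "dd j = fst (cd j)"
definition cc :: "nat \<Rightarrow> nat" where "cc j = snd (cd j)"

lemma cc0: "cc 0 = 2" and dd0: "dd 0 = 1" by (simp_all add: cc_def dd_def)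
lemma dd_Suc: "dd (Suc j) = dd j + cc j" and cc_Suc: "cc (Suc j) = dd j + 2 * cc j"
  by (simp_all add: cc_def dd_def)

lemma cd_basic: "dd j \<ge> 1 \<and> cc j \<ge> dd j + 1"
  by (induction j) (auto simp: cc0 dd0 dd_Suc cc_Suc)

lemma dd_ge1: "dd j \<ge> 1" and cc_gt_dd: "cc j \<ge> dd j + 1" using cd_basic by auto
lemma cc_ge2: "cc j \<ge> 2" using dd_ge1[of j] cc_gt_dd[of j] by simp

lemma cc_step: "cc (Suc j) \<ge> cc j + 3" using dd_ge1[of j] cc_ge2[of j] by (simp add: cc_Suc)
lemma dd_step: "dd (Suc j) \<ge> dd j + 2" using cc_ge2[of j] by (simp add: dd_Suc)

lemma cc_mono: "i < j \<Longrightarrow> cc i + 3 \<le> cc j"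
proof (induction j)
  case 0 thus ?case by simp
next
  case (Suc j) thus ?case using cc_step[of j] by (cases "i = j") auto
qed

lemma dd_mono: "i < j \<Longrightarrow> dd i + 2 \<le> dd j"
proof (induction j)
  case 0 thus ?case by simp
next
  case (Suc j) thus ?case using dd_step[of j] by (cases "i = j") auto
qed

lemma cc_gap: "i \<noteq> j \<Longrightarrow> cc i + 3 \<le> cc j \<or> cc j + 3 \<le> cc i"
  using cc_mono[of i j] cc_mono[of j i] by (cases "i < j") auto

lemma dd_gap: "i \<noteq> j \<Longrightarrow> dd i + 2 \<le> dd j \<or> dd j + 2 \<le> dd i"
  using dd_mono[of i j] dd_mono[of j i] by (cases "i < j") auto

lemma cc_ge5: "j \<ge> 1 \<Longrightarrow> cc j \<ge> 5" using cc_mono[of 0 j] cc0 by simp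

lemma pell: "cc j * cc j = cc j * dd j + dd j * dd j + 1"
proof (induction j)
  case 0 thus ?case by (simp add: cc0 dd0)
next
  case (Suc j)
  show ?case unfolding cc_Suc dd_Suc using Suc by (simp add: algebra_simps)
qed

lemma x_bounds: "0 < real (cc j) - real (dd j) * phi \<and> real (cc j) - real (dd j) * phi < phi - 1
  \<and> (j \<ge> 1 \<longrightarrow> real (cc j) - real (dd j) * phi < 2 - phi)"
proof -
  define c d where "c = real (cc j)" and "d = real (dd j)"
  define x y where "x = c - d * phi" and "y = c + d * phi - d"
  have p: "c * c = c * d + d * d + 1" unfolding c_def d_def using arg_cong[OF pell[of j], of real] by simp
  have "x * y = c * c - c * d - d * d * phi * phi + d * d * phi" unfolding x_def y_def by (simp add: algebra_simps)
  also have "d * d * phi * phi = d * d * phi + d * d" by (rule phi_sq')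
  finally have xy: "x * y = 1" using p by simp
  have d1: "d \<ge> 1" unfolding d_def using dd_ge1[of j] by simp
  have dpos: "d * phi - d \<ge> 0" using d1 phi_pos by (simp add: algebra_simps)
  have y2: "y \<ge> c" unfolding y_def using dpos by simp
  have c2: "c \<ge> 2" unfolding c_def using cc_ge2[of j] by simp
  have ypos: "y > 0" using y2 c2 by simp
  have xpos: "x > 0" using xy ypos by (metis zero_less_mult_pos2 zero_less_one)
  have e1: "(phi - 1) * phi = 1" using phi_sq by (simp add: algebra_simps)
  have "x * phi < x * y" using xpos y2 c2 phi_lt2 by simp
  hence "x * phi < (phi - 1) * phi" using xy e1 by simp
  hence x1: "x < phi - 1" using phi_pos by simp
  have x2: "j \<ge> 1 \<longrightarrow> x < 2 - phi"
  proof
    assume j: "j \<ge> 1"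
    have "c \<ge> 5" unfolding c_def using cc_ge5[OF j] by simp
    hence "x * (phi + 1) < x * y" using xpos y2 phi_lt2 by simp
    moreover have "(2 - phi) * (phi + 1) = 1" using phi_sq by (simp add: algebra_simps)
    ultimately have "x * (phi + 1) < (2 - phi) * (phi + 1)" using xy by simp
    thus "x < 2 - phi" using phi_pos by (smt (verit) mult_right_mono)
  qed
  show ?thesis using xpos x1 x2 unfolding x_def c_def d_def by simp
qed

lemma g_cc: "g (cc j) = dd j"
  by (rule g_eqI) (use x_bounds[of j] in \<open>auto simp: algebra_simps\<close>)

lemma g_ccp: "g (cc j + 1) = dd j"
  by (rule g_eqI) (use x_bounds[of j] in \<open>auto simp: algebra_simps\<close>)

lemma g_ccm: "g (cc j - 1) = dd j - 1"
proof (rule g_eqI)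
  have r: "real (cc j - 1) = real (cc j) - 1" "real (dd j - 1) = real (dd j) - 1"
    using cc_ge2[of j] dd_ge1[of j] by (auto simp: of_nat_diff)
  show "real (dd j - 1) * phi \<le> real (cc j - 1)" unfolding r using x_bounds[of j] phi_pos
    by (simp add: algebra_simps)
  show "real (cc j - 1) < (real (dd j - 1) + 1) * phi" unfolding r using x_bounds[of j] phi_pos phi_lt2
    by (simp add: algebra_simps)
qed

lemma dd_ge3: "j \<ge> 1 \<Longrightarrow> dd j \<ge> 3" using dd_mono[of 0 j] dd0 by simp

lemma g_ccm2: assumes j: "j \<ge> 1" shows "g (cc j - 2) = dd j - 2"
proof (rule g_eqI)
  have r: "real (cc j - 2) = real (cc j) - 2" "real (dd j - 2) = real (dd j) - 2"
    using cc_ge5[OF j] dd_ge3[OF j] by (auto simp: of_nat_diff)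
  show "real (dd j - 2) * phi \<le> real (cc j - 2)" unfolding r using x_bounds[of j] phi_pos
    by (simp add: algebra_simps)
  show "real (cc j - 2) < (real (dd j - 2) + 1) * phi" unfolding r using x_bounds[of j] phi_pos j
    by (simp add: algebra_simps)
qed

lemma up_cc: "up (cc j)" unfolding up_def using g_cc[of j] g_ccm[of j] cc_ge2[of j] dd_ge1[of j] by simp
lemma not_up_ccp: "\<not> up (cc j + 1)" unfolding up_def using g_cc[of j] g_ccp[of j] by simp
lemma up_ccm: assumes "j \<ge> 1" shows "up (cc j - 1)"
proof -
  have "cc j - 1 - 1 = cc j - 2" by simp
  thus ?thesis unfolding up_def using g_ccm[of j] g_ccm2[OF assms] cc_ge5[OF assms] dd_ge3[OF assms]
    by (simp add: Suc_diff_Suc numeral_2_eq_2)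
qed

lemma F_cc: "F (cc j) = cc j + dd j" using up_cc[of j] g_cc[of j] cc_ge2[of j] by (simp add: F_def)
lemma F_ccp: "F (cc j + 1) = dd j + 1" using not_up_ccp[of j] g_ccp[of j] by (simp add: F_def)

lemma up_unique: "up a \<Longrightarrow> up b \<Longrightarrow> g a = g b \<Longrightarrow> a = b"
proof (rule ccontr)
  assume a: "up a" "up b" "g a = g b" "a \<noteq> b"
  { fix a b assume "up a" "up b" "g a = g b" "a < b"
    hence "g a \<le> g (b - 1)" by (intro g_mono) auto
    hence False using \<open>up b\<close> \<open>g a = g b\<close> unfolding up_def by simp }
  thus False using a by (metis linorder_neqE_nat)
qed


definition isC :: "nat \<Rightarrow> bool" where "isC n \<longleftrightarrow> (\<exists>j. n = cc j)"
definition isCm :: "nat \<Rightarrow> bool" where "isCm n \<longleftrightarrow> (\<exists>j\<ge>1. n = cc j - 1)"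

definition Zf :: "nat \<Rightarrow> nat" where
  "Zf n = (if n \<le> 1 then n else if isC n then n + g n else if isCm n then g n else F (Suc n) - 1)"

definition T :: "nat \<Rightarrow> nat" where
  "T n = g (Suc n) - (if isCm n then 1 else 0)"

lemma isC_isCm: "isC n \<Longrightarrow> \<not> isCm n"
proof
  assume "isC n" "isCm n"
  then obtain i j where "n = cc i" "j \<ge> 1" "n = cc j - 1" unfolding isC_def isCm_def by blast
  hence "cc i + 1 = cc j" using cc_ge2[of j] by simp
  thus False using cc_gap[of i j] by (cases "i = j") auto
qed

lemma isCm_prev: "isCm n \<Longrightarrow> \<not> isCm (n - 1)"
proof
  assume "isCm n" "isCm (n - 1)"
  then obtain i j where "j \<ge> 1" "n = cc j - 1" "i \<ge> 1" "n - 1 = cc i - 1" unfolding isCm_def by blast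
  moreover have "cc j \<ge> 5" "cc i \<ge> 5" using \<open>j \<ge> 1\<close> \<open>i \<ge> 1\<close> cc_ge5 by auto
  ultimately have "cc i + 1 = cc j" by simp
  thus False using cc_gap[of i j] by (cases "i = j") auto
qed

lemma isC_prev: "isC n \<Longrightarrow> n \<ge> 3 \<Longrightarrow> isCm (n - 1)"
proof -
  assume "isC n" "n \<ge> 3"
  then obtain j where j: "n = cc j" unfolding isC_def by blast
  hence "j \<noteq> 0" using \<open>n \<ge> 3\<close> cc0 by (cases j) auto
  thus ?thesis unfolding isCm_def using j by (intro exI[of _ j]) auto
qed

lemma gen_prev: "\<not> isC n \<Longrightarrow> \<not> isCm (n - 1)"
proof
  assume "\<not> isC n" "isCm (n - 1)"
  then obtain i where "i \<ge> 1" "n - 1 = cc i - 1" unfolding isCm_def by blast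
  moreover have "cc i \<ge> 2" by (rule cc_ge2)
  ultimately have "n = cc i \<or> n = 0" by linarith
  moreover have "n \<noteq> 0" using \<open>n - 1 = cc i - 1\<close> cc_ge2[of i] by auto
  ultimately show False using \<open>\<not> isC n\<close> unfolding isC_def by auto
qed

lemma Z1: assumes N3: "N \<ge> 3"
  shows "(T N = T (N - 1) \<and> Zf N = T (N - 1)) \<or> (T N = Suc (T (N - 1)) \<and> Zf N = T (N - 1) + N + 1)"
proof -
  have SN: "Suc (N - 1) = N" using N3 by simp
  consider "isCm N" | "isC N" | "\<not> isCm N \<and> \<not> isC N" by blast
  thus ?thesis
  proof cases
    case 1
    then obtain j where j: "j \<ge> 1" "N = cc j - 1" unfolding isCm_def by blast
    have nC: "\<not> isC N" using 1 isC_isCm by blast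
    have sn: "Suc N = cc j" using j cc_ge2[of j] by simp
    have "T N = g N" unfolding T_def using 1 sn g_cc[of j] g_ccm[of j] j by simp
    moreover have "T (N - 1) = g N" unfolding T_def SN using isCm_prev[OF 1] by simp
    moreover have "Zf N = g N" unfolding Zf_def using N3 nC 1 by simp
    ultimately show ?thesis by simp
  next
    case 2
    then obtain j where j: "N = cc j" unfolding isC_def by blast
    have nCm: "\<not> isCm N" using 2 isC_isCm by blast
    have "T N = dd j" unfolding T_def using nCm j g_ccp[of j] by simp
    moreover have "T (N - 1) = dd j - 1" unfolding T_def SN using isC_prev[OF 2 N3] j g_cc[of j] by simp
    moreover have "Zf N = N + dd j" unfolding Zf_def using N3 2 j g_cc[of j] by simp
    ultimately show ?thesis using dd_ge1[of j] by simp
  next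
    case 3
    have TN: "T N = g (Suc N)" unfolding T_def using 3 by simp
    have TN1: "T (N - 1) = g N" unfolding T_def SN using gen_prev 3 by simp
    have ZN: "Zf N = F (Suc N) - 1" unfolding Zf_def using N3 3 by simp
    show ?thesis
    proof (cases "up (Suc N)")
      case True
      hence "g (Suc N) = Suc (g N)" unfolding up_def by simp
      moreover have "F (Suc N) = g (Suc N) + Suc N" using True by (simp add: F_def)
      ultimately show ?thesis using TN TN1 ZN by simp
    next
      case False
      hence "g (Suc N) = g N" using flat[of "Suc N"] by simp
      moreover have "F (Suc N) = g (Suc N) + 1" using False by (simp add: F_def)
      ultimately show ?thesis using TN TN1 ZN by simp
    qed
  qed
qed

lemma not_isCm2: "\<not> isCm 2"
  unfolding isCm_def using cc_ge5 by force

lemma isC2: "isC 2" unfolding isC_def using cc0 by metis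

lemma Zf2: "Zf 2 = 3" unfolding Zf_def using isC2 g2 by simp
lemma T2: "T 2 = 1" unfolding T_def using not_isCm2 g3 by (simp add: numeral_eq_Suc)

lemma Z_sum: "n \<ge> 2 \<Longrightarrow> (\<Sum>i=2..n. Zf i) = (n + 1) * T n"
proof (induction n rule: nat_induct_at_least)
  case base thus ?case using Zf2 T2 by simp
next
  case (Suc n)
  have "(\<Sum>i=2..Suc n. Zf i) = (n + 1) * T n + Zf (Suc n)" using Suc by simp
  also have "\<dots> = (Suc n + 1) * T (Suc n)" using Z1[of "Suc n"] Suc.hyps by auto
  finally show ?case .
qed


definition Gf :: "nat \<Rightarrow> nat" where "Gf n = F (Suc n) - 1"

lemma Gf_inv: "Gf (Gf n) = n"
proof -
  have "F (Suc n) \<ge> 1" by (rule F_pos) simp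
  hence "Suc (F (Suc n) - 1) = F (Suc n)" by simp
  thus ?thesis unfolding Gf_def using F_inv by simp
qed

lemma Gf_cc: "Gf (cc j) = dd j" unfolding Gf_def using F_ccp[of j] by simp
lemma Gf_ccm: "Gf (cc j - 1) = dd (Suc j) - 1"
  unfolding Gf_def using F_cc[of j] cc_ge2[of j] by (simp add: dd_Suc)

definition sp :: "nat \<Rightarrow> bool" where "sp n \<longleftrightarrow> n \<le> 1 \<or> isC n \<or> isCm n"

lemma Zf_gen: "\<not> sp n \<Longrightarrow> Zf n = Gf n" unfolding sp_def Zf_def Gf_def by simp

lemma Zf_cc: "Zf (cc j) = dd (Suc j)"
  unfolding Zf_def isC_def using cc_ge2[of j] g_cc[of j] by (auto simp: dd_Suc)

lemma Zf_ccm: "j \<ge> 1 \<Longrightarrow> Zf (cc j - 1) = dd j - 1"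
proof -
  assume j: "j \<ge> 1"
  have m: "isCm (cc j - 1)" unfolding isCm_def using j by blast
  hence "\<not> isC (cc j - 1)" using isC_isCm by blast
  thus ?thesis unfolding Zf_def using m cc_ge5[OF j] g_ccm[of j] by simp
qed

lemma sp_cases: "sp n \<Longrightarrow> n = 0 \<or> n = 1 \<or> (\<exists>j. n = cc j) \<or> (\<exists>j\<ge>1. n = cc j - 1 \<and> \<not> isC n)"
  unfolding sp_def isC_def isCm_def by auto

lemma Zsp_G: assumes "sp n" "n \<ge> 1" shows "\<exists>m. sp m \<and> Zf n = Gf m"
proof -
  have n0: "n \<noteq> 0" using assms(2) by simp
  consider "n = 1" | j where "n = cc j" | j where "j \<ge> 1" "n = cc j - 1" using sp_cases[OF assms(1)] n0 by blast
  thus ?thesis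
  proof cases
    case 1
    have "Zf n = Gf (cc 0)" using 1 Gf_cc[of 0] dd0 by (simp add: Zf_def)
    moreover have "sp (cc 0)" unfolding sp_def isC_def by blast
    ultimately show ?thesis by blast
  next
    case (2 j)
    have "Zf n = Gf (cc (Suc j))" using 2 Zf_cc Gf_cc by simp
    moreover have "sp (cc (Suc j))" unfolding sp_def isC_def by blast
    ultimately show ?thesis by blast
  next
    case (3 j)
    then obtain i where i: "j = Suc i" by (cases j) auto
    have "Zf n = Gf (cc i - 1)" using 3 Zf_ccm[of j] Gf_ccm[of i] i by simp
    moreover have "sp (cc i - 1)"
    proof (cases i)
      case 0 thus ?thesis unfolding sp_def using cc0 by simp
    next
      case (Suc i') hence "i \<ge> 1" by simp
      thus ?thesis unfolding sp_def isCm_def by blast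
    qed
    ultimately show ?thesis by blast
  qed
qed

lemma sp_val: "sp n \<Longrightarrow> (n = 0 \<and> Zf n = 0) \<or> (n = 1 \<and> Zf n = 1) \<or> (\<exists>j. n = cc j \<and> Zf n = dd (Suc j))
   \<or> (\<exists>j\<ge>1. n = cc j - 1 \<and> Zf n = dd j - 1)"
proof -
  assume "sp n"
  then consider "n = 0" | "n = 1" | j where "n = cc j" | j where "j \<ge> 1" "n = cc j - 1"
    using sp_cases by blast
  thus ?thesis
  proof cases
    case 1 thus ?thesis by (simp add: Zf_def)
  next
    case 2 thus ?thesis by (simp add: Zf_def)
  next
    case (3 j) thus ?thesis using Zf_cc[of j] by blast
  next
    case (4 j) thus ?thesis using Zf_ccm[of j] by blast
  qed
qed

lemma dd_inj: "dd i = dd j \<Longrightarrow> i = j" using dd_gap[of i j] by (cases "i = j") auto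
lemma cc_inj: "cc i = cc j \<Longrightarrow> i = j" using cc_gap[of i j] by (cases "i = j") auto

lemma Zf_inj_sp: assumes "sp a" "sp b" "Zf a = Zf b" shows "a = b"
proof -
  have D1: "dd (Suc i) \<noteq> dd j - 1" if "j \<ge> 1" for i j
    using dd_gap[of "Suc i" j] dd_ge1[of j] by (cases "Suc i = j") auto
  have D2: "dd (Suc i) \<ge> 3" for i using dd_ge3[of "Suc i"] by simp
  have D3: "j \<ge> 1 \<Longrightarrow> dd j - 1 \<ge> 2" for j using dd_ge3[of j] by simp
  have D4: "j \<ge> 1 \<Longrightarrow> i \<ge> 1 \<Longrightarrow> dd j - 1 = dd i - 1 \<Longrightarrow> j = i" for i j
    using dd_inj dd_ge1[of i] dd_ge1[of j] by (metis Suc_diff_1 less_le_trans zero_less_one)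
  have E1: "dd (Suc i) \<noteq> 0 \<and> dd (Suc i) \<noteq> 1 \<and> 0 \<noteq> dd (Suc i) \<and> 1 \<noteq> dd (Suc i)" for i using D2[of i] by auto
  have E2: "j \<ge> 1 \<Longrightarrow> dd j - 1 \<noteq> 0 \<and> dd j - 1 \<noteq> 1 \<and> \<not> dd j \<le> Suc 0 \<and> \<not> dd j \<le> 2 \<and> dd j \<noteq> 2 \<and> 0 \<noteq> dd j - 1 \<and> 1 \<noteq> dd j - 1" for j using D3[of j] by auto
  consider "a = 0" "Zf a = 0" | "a = 1" "Zf a = 1" | i where "a = cc i" "Zf a = dd (Suc i)"
    | i where "i \<ge> 1" "a = cc i - 1" "Zf a = dd i - 1" using sp_val[OF assms(1)] by (elim disjE exE conjE) blast+
  note ca = this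
  consider "b = 0" "Zf b = 0" | "b = 1" "Zf b = 1" | j where "b = cc j" "Zf b = dd (Suc j)"
    | j where "j \<ge> 1" "b = cc j - 1" "Zf b = dd j - 1" using sp_val[OF assms(2)] by (elim disjE exE conjE) blast+
  note cb = this
  show ?thesis
  proof (cases rule: ca)
    case 1 note a1 = this
    show ?thesis
    proof (cases rule: cb)
      case (3 j) thus ?thesis using a1 assms(3) D2[of j] by linarith
    next
      case (4 j) thus ?thesis using a1 assms(3) D3[of j] by linarith
    qed (use a1 assms(3) in linarith)+
  next
    case 2 note a1 = this
    show ?thesis
    proof (cases rule: cb)
      case (3 j) thus ?thesis using a1 assms(3) D2[of j] by linarith
    next
      case (4 j) thus ?thesis using a1 assms(3) D3[of j] by linarith
    qed (use a1 assms(3) in linarith)+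
  next
    case (3 i) show ?thesis
    proof (cases rule: cb)
      case (3 j)
      have "dd (Suc i) = dd (Suc j)" using \<open>Zf a = dd (Suc i)\<close> 3 assms(3) by simp
      hence "Suc i = Suc j" by (rule dd_inj)
      thus ?thesis using \<open>a = cc i\<close> 3 by simp
    next
      case (4 j) thus ?thesis using \<open>Zf a = dd (Suc i)\<close> assms(3) D1[of j i] by argo
    next
      case 1 thus ?thesis using D2[of i] \<open>Zf a = dd (Suc i)\<close> assms(3) by linarith
    next
      case 2 thus ?thesis using D2[of i] \<open>Zf a = dd (Suc i)\<close> assms(3) by linarith
    qed
  next
    case (4 i) show ?thesis
    proof (cases rule: cb)
      case (3 j) thus ?thesis using \<open>Zf a = dd i - 1\<close> \<open>i \<ge> 1\<close> assms(3) D1[of i j] by argo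
    next
      case (4 j)
      have "j = i" using \<open>Zf a = dd i - 1\<close> \<open>i \<ge> 1\<close> 4 assms(3) D4[of j i] by argo
      thus ?thesis using \<open>a = cc i - 1\<close> 4 by simp
    next
      case 1 thus ?thesis using D3[of i] \<open>i \<ge> 1\<close> \<open>Zf a = dd i - 1\<close> assms(3) by linarith
    next
      case 2 thus ?thesis using D3[of i] \<open>i \<ge> 1\<close> \<open>Zf a = dd i - 1\<close> assms(3) by linarith
    qed
  qed
qed

lemma Zf_inj: assumes "Zf a = Zf b" shows "a = b"
proof -
  have side: "a = b" if "sp a" "\<not> sp b" "Zf a = Zf b" for a b
  proof (cases "a = 0")
    case True
    hence "Gf b = 0" using that Zf_gen[of b] by (simp add: Zf_def)
    hence "F (Suc b) \<le> 1" unfolding Gf_def by simp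
    hence "F (Suc b) = 1" using F_pos[of "Suc b"] by simp
    hence "Suc b = F 1" using F_inv[of "Suc b"] by simp
    moreover have "g (Suc 0) = 0" using g1 by simp
    moreover have "F 1 = 1" using calculation(2) by (simp add: F_def up_def g0)
    ultimately have "b = 0" by simp
    thus ?thesis using that unfolding sp_def by simp
  next
    case False
    hence "a \<ge> 1" by simp
    then obtain m where "sp m" "Zf a = Gf m" using Zsp_G[OF \<open>sp a\<close>] by blast
    hence "Gf b = Gf m" using that Zf_gen[of b] by simp
    hence "b = m" using Gf_inv by metis
    thus ?thesis using \<open>sp m\<close> that by simp
  qed
  show ?thesis
  proof (cases "sp a"; cases "sp b")
    assume "sp a" "sp b" thus ?thesis using Zf_inj_sp assms by blast
  next
    assume "sp a" "\<not> sp b" thus ?thesis using side assms by blast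
  next
    assume "\<not> sp a" "sp b" thus ?thesis using side[of b a] assms by simp
  next
    assume "\<not> sp a" "\<not> sp b" thus ?thesis using assms Zf_gen Gf_inv by metis
  qed
qed


lemma Z2: assumes N3: "N \<ge> 3" and upT: "T N = Suc (T (N - 1))"
  shows "\<exists>i<N. Zf i = T (N - 1)"
proof -
  have SN: "Suc (N - 1) = N" using N3 by simp
  consider "isCm N" | "isC N" | "\<not> isCm N \<and> \<not> isC N" by blast
  thus ?thesis
  proof cases
    case 1
    then obtain j where j: "j \<ge> 1" "N = cc j - 1" unfolding isCm_def by blast
    have sn: "Suc N = cc j" using j cc_ge2[of j] by simp
    have "T N = g N" unfolding T_def using 1 sn g_cc[of j] g_ccm[of j] j by simp
    moreover have "T (N - 1) = g N" unfolding T_def SN using isCm_prev[OF 1] by simp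
    ultimately show ?thesis using upT by simp
  next
    case 2
    then obtain j where j: "N = cc j" unfolding isC_def by blast
    have j1: "j \<ge> 1" using j N3 cc0 by (cases j) auto
    have "T (N - 1) = dd j - 1" unfolding T_def SN using isC_prev[OF 2 N3] j g_cc[of j] by simp
    moreover have "Zf (cc j - 1) = dd j - 1" by (rule Zf_ccm[OF j1])
    moreover have "cc j - 1 < N" using j cc_ge2[of j] by simp
    ultimately show ?thesis by metis
  next
    case 3
    have TN: "T N = g (Suc N)" unfolding T_def using 3 by simp
    have TN1: "T (N - 1) = g N" unfolding T_def SN using gen_prev 3 by simp
    have gs: "g (Suc N) = Suc (g N)" using upT TN TN1 by simp
    hence u: "up (Suc N)" unfolding up_def by simp
    define K where "K = g (Suc N)"
    have K1: "K \<ge> 1" using gs K_def by simp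
    have FK: "F K < Suc N" "F (F K) = K" using F_used[OF u] K_def by auto
    have FK1: "F K \<ge> 1" using F_pos[OF K1] .
    define i0 where "i0 = F K - 1"
    have i0N: "i0 < N" using FK FK1 i0_def by simp
    have Fi0: "F K = Suc i0" using FK1 i0_def by simp
    have gN1: "g N \<ge> 1" using g_ge1[of N] N3 by simp
    show ?thesis
    proof (cases "i0 = 0")
      case True
      hence "K = F 1" using FK(2) Fi0 by simp
      moreover have "g (Suc 0) = 0" using g1 by simp
      moreover have "F 1 = 1" using calculation(2) by (simp add: F_def up_def g0)
      ultimately have "K = 1" by simp
      thus ?thesis using gs K_def gN1 by simp
    next
      case nz: False
      show ?thesis
      proof (cases "isC i0")
        case True
        then obtain j where j: "i0 = cc j" unfolding isC_def by blast
        have "K = dd j + 1" using FK(2) Fi0 j F_ccp[of j] by simp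
        hence gNd: "g N = dd j" using gs K_def by simp
        show ?thesis
        proof (cases j)
          case 0
          have "Zf 1 = 1" by (simp add: Zf_def)
          thus ?thesis using TN1 gNd 0 dd0 N3 by (intro exI[of _ 1]) auto
        next
          case (Suc j')
          have "Zf (cc j') = dd j" using Zf_cc[of j'] Suc by simp
          moreover have "cc j' < dd j" using Suc dd_Suc[of j'] dd_ge1[of j'] by simp
          moreover have "g N < N" using g_lt[of N] N3 by simp
          ultimately show ?thesis using TN1 gNd by (intro exI[of _ "cc j'"]) auto
        qed
      next
        case nC: False
        show ?thesis
        proof (cases "i0 = 1 \<or> isCm i0")
          case True
          obtain j where j: "Suc i0 = cc j"
          proof (cases "i0 = 1")
            case True thus ?thesis using that[of 0] cc0 by simp
          next
            case False
            then obtain j where "j \<ge> 1" "i0 = cc j - 1" using \<open>i0 = 1 \<or> isCm i0\<close> unfolding isCm_def by blast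
            thus ?thesis using that[of j] cc_ge2[of j] by simp
          qed
          have "K = cc j + dd j" using FK(2) Fi0 j F_cc[of j] by simp
          hence "g (Suc N) = g (cc (Suc j))" using K_def g_cc[of "Suc j"] dd_Suc[of j] by simp
          hence "Suc N = cc (Suc j)" using up_unique[OF u up_cc[of "Suc j"]] by simp
          hence "isCm N" unfolding isCm_def by (intro exI[of _ "Suc j"]) auto
          thus ?thesis using 3 by simp
        next
          case False
          hence "\<not> sp i0" using nz nC unfolding sp_def by simp
          hence "Zf i0 = Gf i0" by (rule Zf_gen)
          also have "\<dots> = K - 1" unfolding Gf_def using Fi0[symmetric] FK(2) by simp
          also have "\<dots> = T (N - 1)" using gs K_def TN1 by simp
          finally show ?thesis using i0N by blast
        qed
      qed
    qed
  qed
qed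


lemma T_le: "T n \<le> g (Suc n)" unfolding T_def by simp

lemma Z_least: assumes n2: "n \<ge> 2"
  shows "(LEAST m. m \<notin> Zf ` {0..n} \<and> (Suc n + 1) dvd ((\<Sum>i=2..n. Zf i) + m)) = Zf (Suc n)"
proof (rule Least_equality)
  have S1: "(\<Sum>i=2..Suc n. Zf i) = (\<Sum>i=2..n. Zf i) + Zf (Suc n)" using n2 by simp
  show "Zf (Suc n) \<notin> Zf ` {0..n} \<and> (Suc n + 1) dvd ((\<Sum>i=2..n. Zf i) + Zf (Suc n))"
  proof
    show "Zf (Suc n) \<notin> Zf ` {0..n}" by (auto dest: Zf_inj)
    have "(\<Sum>i=2..n. Zf i) + Zf (Suc n) = (Suc n + 1) * T (Suc n)" using Z_sum[of "Suc n"] S1 n2 by simp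
    thus "(Suc n + 1) dvd ((\<Sum>i=2..n. Zf i) + Zf (Suc n))" by (metis dvd_triv_left)
  qed
next
  fix y assume y: "y \<notin> Zf ` {0..n} \<and> (Suc n + 1) dvd ((\<Sum>i=2..n. Zf i) + y)"
  define N where "N = Suc n"
  define r where "r = T n"
  have N3: "N \<ge> 3" using n2 N_def by simp
  have rn: "T (N - 1) = r" using N_def r_def by simp
  have "(\<Sum>i=2..n. Zf i) + y = N * r + y" using Z_sum[OF n2] N_def r_def by simp
  hence "(N + 1) dvd (N * r + y)" using y N_def by simp
  hence "int (N + 1) dvd int (N * r + y)" by (simp only: of_nat_dvd_iff)
  hence dv: "int (N + 1) dvd (int N * int r + int y)" by simp
  have dv2: "int (N + 1) dvd (int y - int r)"
  proof -
    have "int N * int r + int y = int (N + 1) * int r + (int y - int r)" by (simp add: algebra_simps)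
    thus ?thesis using dv by (metis dvd_add_right_iff dvd_triv_left)
  qed
  have rN: "r \<le> N" using T_le[of n] g_lt[of "Suc n"] r_def N_def by simp
  show "Zf (Suc n) \<le> y"
  proof (rule ccontr)
    assume less: "\<not> Zf (Suc n) \<le> y"
    from Z1[OF N3] show False
    proof
      assume a: "T N = T (N - 1) \<and> Zf N = T (N - 1)"
      hence "int y - int r = 0" using dv2 less rN N_def rn by (intro dvd_small) auto
      thus False using less a N_def rn by simp
    next
      assume a: "T N = Suc (T (N - 1)) \<and> Zf N = T (N - 1) + N + 1"
      hence "int y - int r = 0" using dv2 less rN N_def rn by (intro dvd_small) auto
      hence "y = r" by simp
      moreover obtain i where "i < N" "Zf i = T (N - 1)" using Z2[OF N3] a by blast
      ultimately have "y \<in> Zf ` {0..n}" using rn N_def by (intro image_eqI[of _ _ i]) auto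
      thus False using y by simp
    qed
  qed
qed

lemma zpre_eq: "zpre n = map Zf [0..<Suc n]"
proof (induction n)
  case 0 thus ?case by (simp add: Zf_def)
next
  case (Suc n)
  have st: "set (map Zf [0..<Suc n]) = Zf ` {0..n}" by (simp add: atLeastLessThanSuc_atLeastAtMost del: upt_Suc)
  have zs: "zpre (Suc n) = map Zf [0..<Suc n] @ [LEAST m. m \<notin> Zf ` {0..n} \<and>
             (Suc n + 1) dvd (sum_list (drop 2 (map Zf [0..<Suc n] @ [m])))]"
    using Suc st by (simp add: Let_def del: upt_Suc)
  have L: "(LEAST m. m \<notin> Zf ` {0..n} \<and> (Suc n + 1) dvd (sum_list (drop 2 (map Zf [0..<Suc n] @ [m]))))
        = Zf (Suc n)"
  proof (cases "n \<ge> 2")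
    case True
    have "sum_list (drop 2 (map Zf [0..<Suc n] @ [m])) = (\<Sum>i=2..n. Zf i) + m" for m
    proof -
      have "drop 2 (map Zf [0..<Suc n] @ [m]) = map Zf [2..<Suc n] @ [m]"
        using True by (simp add: drop_map numeral_2_eq_2 del: upt_Suc)
      thus ?thesis by (simp add: sum_set_upt_conv_sum_list_nat[symmetric] atLeastLessThanSuc_atLeastAtMost del: upt_Suc)
    qed
    thus ?thesis using Z_least[OF True] by simp
  next
    case False
    hence "n = 0 \<or> n = 1" by auto
    thus ?thesis
    proof
      assume n0: "n = 0"
      have "(LEAST m. m \<notin> Zf ` {0..n} \<and> (Suc n + 1) dvd (sum_list (drop 2 (map Zf [0..<Suc n] @ [m])))) = 1"
      proof (intro Least_equality)
        have "Zf 0 = 0" by (simp add: Zf_def)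
        thus "1 \<notin> Zf ` {0..n} \<and> (Suc n + 1) dvd (sum_list (drop 2 (map Zf [0..<Suc n] @ [1])))" using n0 by simp
      next
        fix y assume "y \<notin> Zf ` {0..n} \<and> (Suc n + 1) dvd (sum_list (drop 2 (map Zf [0..<Suc n] @ [y])))"
        moreover have "Zf 0 = 0" by (simp add: Zf_def)
        ultimately show "1 \<le> y" using n0 by (cases y) auto
      qed
      thus ?thesis using n0 by (simp add: Zf_def)
    next
      assume n1: "n = 1"
      have z01: "Zf 0 = 0" "Zf 1 = 1" by (simp_all add: Zf_def)
      have "{0..1::nat} = {0, 1}" by auto
      hence im: "Zf ` {0..n} = {0, 1}" using n1 z01 by simp
      have "(LEAST m. m \<notin> Zf ` {0..n} \<and> (Suc n + 1) dvd (sum_list (drop 2 (map Zf [0..<Suc n] @ [m])))) = 3"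
      proof (intro Least_equality)
        show "3 \<notin> Zf ` {0..n} \<and> (Suc n + 1) dvd (sum_list (drop 2 (map Zf [0..<Suc n] @ [3])))"
          using n1 im by (simp add: numeral_2_eq_2 numeral_3_eq_3)
      next
        fix y assume "y \<notin> Zf ` {0..n} \<and> (Suc n + 1) dvd sum_list (drop 2 (map Zf [0..<Suc n] @ [y]))"
        hence "y \<notin> {0, 1}" "3 dvd y" using n1 im by (simp_all add: numeral_2_eq_2 numeral_3_eq_3)
        thus "3 \<le> y" using dvd_imp_le[of 3 y] by auto
      qed
      moreover have "Suc n = 2" using n1 by simp
      ultimately show ?thesis using Zf2 by metis
    qed
  qed
  show ?case using zs L by simp
qed

lemma z_eq: "z n = Zf n" unfolding z_def zpre_eq by simp


lemma phi_gt: "phi > 3/2" unfolding phi_def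
proof -
  have "sqrt 5 > 2" by (rule real_less_rsqrt) auto
  thus "(1 + sqrt 5) / 2 > 3/2" by simp
qed

lemma cond_R: assumes n2: "n \<ge> 2" and nu: "\<not> up n" and u: "up (Suc n)"
  shows "\<exists>k::int. k \<ge> 1 \<and> int n = \<lfloor>of_int k * phi ^ 2\<rfloor> + 1"
proof -
  define j where "j = g (Suc n)"
  have gn: "g n = j - 1" "j \<ge> 1" using u j_def unfolding up_def by auto
  have gn1: "g (n - 1) = j - 1" using flat[of n] nu n2 gn by simp
  have rj: "real (j - 1) = real j - 1" using gn by (simp add: of_nat_diff)
  have h1: "(real j - 1) * phi \<le> real n - 1" using g_lower[of "n-1"] gn1 rj n2 by (simp add: of_nat_diff)
  have h2: "real n < real j * phi" using g_upper[of n] gn rj by simp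
  have h3: "real j * phi \<le> real n + 1" using g_lower[of "Suc n"] j_def by simp
  have jn: "j < n"
  proof (rule ccontr)
    assume "\<not> j < n" hence "real n \<le> real j" by simp
    hence "real n * phi \<le> real j * phi" by (rule mphi_le)
    moreover have "real n * (3/2) < real n * phi" using phi_gt n2
      by (intro mult_strict_left_mono) auto
    ultimately show False using h3 n2 by linarith
  qed
  define k where "k = int n - int j"
  have k1: "k \<ge> 1" using jn k_def by simp
  have kr: "of_int k = real n - real j" unfolding k_def by simp
  have sq: "phi ^ 2 = phi + 1" using phi_sq by (simp add: power2_eq_square)
  have m1: "real n * phi < real j * phi * phi" using mphi[OF h2] .
  have m2: "real j * phi * phi \<le> (real n - 1 + phi) * phi" using mphi_le[of "real j * phi" "real n - 1 + phi"] h1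
    by (simp add: algebra_simps)
  have e1: "real j * phi * phi = real j * phi + real j" by (rule phi_sq')
  have e2: "(real n - 1 + phi) * phi = real n * phi - phi + phi + 1" using phi_sq by (simp add: algebra_simps)
  have ex: "of_int k * phi ^ 2 = real n * phi + real n - real j * phi - real j" unfolding kr sq
    by (simp add: algebra_simps)
  have "\<lfloor>of_int k * phi ^ 2\<rfloor> = int n - 1"
    unfolding floor_eq_iff ex using m1 m2 e1 e2 by simp
  thus ?thesis using k1 by (intro exI[of _ k]) simp
qed

lemma R_cond: assumes n1: "n \<ge> 1" and k1: "k \<ge> 1" and e: "int n = \<lfloor>of_int k * phi ^ 2\<rfloor> + 1"
  shows "n \<ge> 2 \<and> \<not> up n \<and> up (Suc n)"
proof -
  have fl: "\<lfloor>of_int k * phi ^ 2\<rfloor> = int n - 1" using e by simp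
  have b1: "real n - 1 \<le> of_int k * phi ^ 2" "of_int k * phi ^ 2 < real n"
    using fl unfolding floor_eq_iff by auto
  have sq: "phi ^ 2 = phi + 1" using phi_sq by (simp add: power2_eq_square)
  define K where "K = nat k"
  have kK: "of_int k = real K" using k1 K_def by simp
  have K1: "K \<ge> 1" using k1 K_def by simp
  have b2: "real n - 1 \<le> real K * phi + real K" "real K * phi + real K < real n"
    using b1 unfolding kK sq by (simp_all add: algebra_simps)
  have Kphi: "real K \<le> real K * phi" using mult_left_mono[of 1 phi "real K"] phi_pos by simp
  have Kn: "K < n" using b2 Kphi K1 by linarith
  have n2: "n \<ge> 2" using b2 Kphi K1 by linarith
  define j where "j = n - K"
  have rj: "real j = real n - real K" using Kn j_def by (simp add: of_nat_diff)
  have j1: "real j * phi * phi = (real n * phi - real K * phi) + real j" unfolding rj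
    using phi_sq'[of "real n - real K"] by (simp add: algebra_simps)
  have c1: "real n * phi < real j * phi * phi" using j1 b2 rj by linarith
  have c2: "real j * phi * phi \<le> real n * phi + 1" using j1 b2 rj by linarith
  have d1: "real n < real j * phi"
  proof -
    have "real n * phi * (phi - 1) < real j * phi * phi * (phi - 1)" using mpm[OF c1] .
    thus ?thesis using pm_eq[of "real n"] pm_eq[of "real j * phi"] by simp
  qed
  have d2: "real j * phi \<le> real n + (phi - 1)"
  proof -
    have "real j * phi * phi * (phi - 1) \<le> (real n * phi + 1) * (phi - 1)" using mpm_le[OF c2] .
    thus ?thesis using pm_eq[of "real n"] pm_eq[of "real j * phi"] by (simp add: algebra_simps)
  qed
  have jpos: "j \<ge> 1" using d1 n1 by (cases j) auto
  have rj1: "real (j - 1) = real j - 1" using jpos by (simp add: of_nat_diff)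
  have rn1: "real (n - 1) = real n - 1" using n1 by (simp add: of_nat_diff)
  have G1: "g (Suc n) = j" by (rule g_eqI) (use d1 d2 phi_pos phi_lt2 in \<open>auto simp: algebra_simps\<close>)
  have G2: "g n = j - 1" by (rule g_eqI) (use d1 d2 phi_pos phi_lt2 jpos rj1 in \<open>auto simp: algebra_simps\<close>)
  have G3: "g (n - 1) = j - 1" by (rule g_eqI) (use d1 d2 phi_pos phi_lt2 jpos rj1 rn1 in \<open>auto simp: algebra_simps\<close>)
  show ?thesis using G1 G2 G3 n2 jpos unfolding up_def by auto
qed


lemma F1: "F 1 = 1"
proof -
  have "g (Suc 0) = 0" using g1 by simp
  thus ?thesis by (simp add: F_def up_def g0)
qed

lemma LHS: assumes n1: "n \<ge> 1" shows "Zf n = F n + n \<longleftrightarrow> n \<ge> 2 \<and> \<not> up n \<and> up (Suc n)"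
proof (cases "sp n")
  case True
  consider "n = 1" | j where "n = cc j" | j where "j \<ge> 1" "n = cc j - 1"
    using sp_cases[OF True] n1 by (metis not_one_le_zero)
  thus ?thesis
  proof cases
    case 1 thus ?thesis using F1 by (simp add: Zf_def)
  next
    case (2 j)
    have "Zf n = cc j + dd j" using 2 Zf_cc[of j] dd_Suc[of j] by simp
    moreover have "F n = cc j + dd j" using 2 F_cc by simp
    ultimately show ?thesis using 2 up_cc[of j] cc_ge2[of j] by simp
  next
    case (3 j)
    have "Zf n = dd j - 1" using 3 Zf_ccm by simp
    moreover have "dd j - 1 < n" using 3 cc_gt_dd[of j] dd_ge1[of j] by simp
    ultimately show ?thesis using 3 up_ccm[of j] by simp
  qed
next
  case False
  have n2: "n \<ge> 2" using False n1 unfolding sp_def by simp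
  have Z: "Zf n = F (Suc n) - 1" using Zf_gen[OF False] unfolding Gf_def .
  show ?thesis
  proof (cases "up (Suc n)")
    case True
    have gs: "g (Suc n) = Suc (g n)" using True unfolding up_def by simp
    have FS: "F (Suc n) = g (Suc n) + Suc n" using True by (simp add: F_def)
    show ?thesis
    proof (cases "up n")
      case True
      have "F n = g n + n" using True n2 by (simp add: F_def)
      thus ?thesis using Z FS gs True n2 by simp
    next
      case nu: False
      have "g n = g (n - 1)" using flat[OF n1 nu] .
      have "F n = g n + 1" using nu n2 by (simp add: F_def)
      thus ?thesis using Z FS gs True nu n2 by simp
    qed
  next
    case nu: False
    have "g (Suc n) = g n" using flat[of "Suc n"] nu by simp
    moreover have "F (Suc n) = g (Suc n) + 1" using nu by (simp add: F_def)
    moreover have "g n < n" using g_lt n1 by simp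
    ultimately show ?thesis using Z nu by simp
  qed
qed

theorem mainTheorem9:
  fixes n :: nat
  shows "z n = f n + n \<longleftrightarrow>
           (n = 0 \<or> (\<exists>k::int. k \<ge> 1 \<and> int n = \<lfloor>of_int k * phi ^ 2\<rfloor> + 1))"
proof (cases "n = 0")
  case True thus ?thesis by (simp add: z_eq f_eq Zf_def F_def)
next
  case False
  hence n1: "n \<ge> 1" by simp
  have "z n = f n + n \<longleftrightarrow> n \<ge> 2 \<and> \<not> up n \<and> up (Suc n)" unfolding z_eq f_eq using LHS[OF n1] .
  also have "\<dots> \<longleftrightarrow> (\<exists>k::int. k \<ge> 1 \<and> int n = \<lfloor>of_int k * phi ^ 2\<rfloor> + 1)"
    using cond_R R_cond[OF n1] by blast
  finally show ?thesis using False by simp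
qed

end
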